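(* For every $n\ge1$ and every decoration $\delta\in\{\text{none},\text{down},\text{up},\text{updown}\}^n$, the $\delta$-permutree congruence $\equiv_\delta$ is a lattice congruence of the right weak order on $\mathfrak S_n$: if $\sigma\equiv_\delta\sigma'$ and $\tau\equiv_\delta\tau'$ then $\sigma\wedge\tau\equiv_\delta\sigma'\wedge\tau'$ and $\sigma\vee\tau\equiv_\delta\sigma'\vee\tau'$.
   Context: Permutations of $[n]$ are written as words $\sigma(1)\cdots\sigma(n)$. Right weak order: $\sigma\le\tau$ iff the value-inversion set $\{(a,b):a<b,\ \sigma^{-1}(b)<\sigma^{-1}(a)\}$ of $\sigma$ is contained in that of $\tau$; it is a lattice with meet $\wedge$ and join $\vee$. A decoration is a word $\delta=\delta_1\cdots\delta_n$ over $\{\text{none},\text{down},\text{up},\text{updown}\}$; call $b$ down-decorated if $\delta_b\in\{\text{down},\text{updown}\}$ and up-decorated if $\delta_b\in\{\text{up},\text{updown}\}$. The $\delta$-permutree congruence $\equiv_\delta$ is the equivalence relation on $\mathfrak S_n$ generated by the rewriting rules $U\,ac\,V\,b\,W\equiv U\,ca\,V\,b\,W$ whenever $a<b<c$ and $b$ is down-decorated, and $U\,b\,V\,ac\,W\equiv U\,b\,V\,ca\,W$ whenever $a<b<c$ and $b$ is up-decorated (here $U,V,W$ are words and $ac$ are adjacent letters). *)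

theory Defs
  imports Main
begin

definition perms :: "nat \<Rightarrow> nat list set" where
  "perms n = {w. distinct w \<and> set w = {1..n}}"

definition inv_set :: "nat list \<Rightarrow> (nat \<times> nat) set" where
  "inv_set w = {(a, b). a < b \<and> (\<exists>i j. i < j \<and> j < length w \<and> w ! i = b \<and> w ! j = a)}"

definition weak_le :: "nat list \<Rightarrow> nat list \<Rightarrow> bool" where
  "weak_le s t \<longleftrightarrow> inv_set s \<subseteq> inv_set t"

definition weak_meet :: "nat \<Rightarrow> nat list \<Rightarrow> nat list \<Rightarrow> nat list" where
  "weak_meet n s t = (THE m. m \<in> perms n \<and> weak_le m s \<and> weak_le m t \<and>
      (\<forall>u\<in>perms n. weak_le u s \<and> weak_le u t \<longrightarrow> weak_le u m))"

definition weak_join :: "nat \<Rightarrow> nat list \<Rightarrow> nat list \<Rightarrow> nat list" where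
  "weak_join n s t = (THE m. m \<in> perms n \<and> weak_le s m \<and> weak_le t m \<and>
      (\<forall>u\<in>perms n. weak_le s u \<and> weak_le t u \<longrightarrow> weak_le m u))"

datatype deco = DNone | DDown | DUp | DUpDown

text \<open>Decoration word delta = delta_1 ... delta_n stored as a list; delta_b = delta ! (b - 1).\<close>
definition down_dec :: "deco list \<Rightarrow> nat \<Rightarrow> bool" where
  "down_dec \<delta> b \<longleftrightarrow> \<delta> ! (b - 1) \<in> {DDown, DUpDown}"

definition up_dec :: "deco list \<Rightarrow> nat \<Rightarrow> bool" where
  "up_dec \<delta> b \<longleftrightarrow> \<delta> ! (b - 1) \<in> {DUp, DUpDown}"

inductive ptree_step :: "deco list \<Rightarrow> nat list \<Rightarrow> nat list \<Rightarrow> bool" for \<delta> where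
  down_ac: "\<lbrakk>a < b; b < c; down_dec \<delta> b\<rbrakk> \<Longrightarrow>
     ptree_step \<delta> (U @ [a, c] @ V @ [b] @ W) (U @ [c, a] @ V @ [b] @ W)"
| down_ca: "\<lbrakk>a < b; b < c; down_dec \<delta> b\<rbrakk> \<Longrightarrow>
     ptree_step \<delta> (U @ [c, a] @ V @ [b] @ W) (U @ [a, c] @ V @ [b] @ W)"
| up_ac: "\<lbrakk>a < b; b < c; up_dec \<delta> b\<rbrakk> \<Longrightarrow>
     ptree_step \<delta> (U @ [b] @ V @ [a, c] @ W) (U @ [b] @ V @ [c, a] @ W)"
| up_ca: "\<lbrakk>a < b; b < c; up_dec \<delta> b\<rbrakk> \<Longrightarrow>
     ptree_step \<delta> (U @ [b] @ V @ [c, a] @ W) (U @ [b] @ V @ [a, c] @ W)"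

definition ptree_cong :: "deco list \<Rightarrow> nat list \<Rightarrow> nat list \<Rightarrow> bool" where
  "ptree_cong \<delta> = (ptree_step \<delta>)\<^sup>*\<^sup>*"

end

theory Submission
  imports Defs
begin

lemma inv_set_Nil[simp]: "inv_set [] = {}"
  by (simp add: inv_set_def)

lemma inv_set_Cons: "inv_set (x#xs) = inv_set xs \<union> {(a,x)| a. a<x \<and> a \<in> set xs}"
proof (intro set_eqI iffI)
  fix p assume "p \<in> inv_set (x#xs)"
  then obtain a b i j where p: "p=(a,b)" "a<b" "i<j" "j<length (x#xs)" "(x#xs)!i=b" "(x#xs)!j=a"
    unfolding inv_set_def by blast
  then obtain j' where j': "j = Suc j'" by (cases j) auto
  show "p \<in> inv_set xs \<union> {(a,x)| a. a<x \<and> a \<in> set xs}"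
  proof (cases i)
    case 0 then show ?thesis using p j' by (auto simp: nth_mem)
  next
    case (Suc i') then have "(a,b) \<in> inv_set xs" using p j' unfolding inv_set_def by auto
    then show ?thesis using p by simp
  qed
next
  fix p assume "p \<in> inv_set xs \<union> {(a,x)| a. a<x \<and> a \<in> set xs}"
  then show "p \<in> inv_set (x#xs)"
  proof
    assume "p \<in> inv_set xs"
    then obtain a b i j where p: "p=(a,b)" "a<b" "i<j" "j<length xs" "xs!i=b" "xs!j=a"
      unfolding inv_set_def by blast
    then have "Suc i < Suc j" "Suc j < length (x#xs)" "(x#xs)!Suc i = b" "(x#xs)!Suc j = a" by auto
    then show ?thesis unfolding inv_set_def using p(1,2) by blast
  next
    assume "p \<in> {(a,x)| a. a<x \<and> a \<in> set xs}"
    then obtain a j where p: "p=(a,x)" "a<x" "j<length xs" "xs!j=a"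
      by (auto simp: in_set_conv_nth)
    then have "0 < Suc j" "Suc j < length (x#xs)" "(x#xs)!0 = x" "(x#xs)!Suc j = a" by auto
    then show ?thesis unfolding inv_set_def using p(1,2) by blast
  qed
qed

lemma inv_set_append: "inv_set (xs@ys) = inv_set xs \<union> inv_set ys \<union> {(a,b). a<b \<and> b \<in> set xs \<and> a \<in> set ys}"
  by (induction xs) (auto simp: inv_set_Cons)

lemma inv_set_single[simp]: "inv_set [x] = {}"
  by (simp add: inv_set_Cons)

lemma inv_set_subset: "inv_set w \<subseteq> {(a,b). a<b \<and> a \<in> set w \<and> b \<in> set w}"
  by (induction w) (auto simp: inv_set_Cons)

lemma inv_set_eq_imp_eq:
  "distinct w \<Longrightarrow> distinct w' \<Longrightarrow> set w = set w' \<Longrightarrow> inv_set w = inv_set w' \<Longrightarrow> w = w'"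
proof (induction w arbitrary: w')
  case Nil then show ?case by simp
next
  case (Cons x xs)
  then have "x \<in> set w'" by auto
  then obtain ys zs where w': "w' = ys @ x # zs" by (meson split_list)
  have "ys = []"
  proof (rule ccontr)
    assume "ys \<noteq> []"
    then obtain y where y: "y \<in> set ys" by (cases ys) auto
    with Cons.prems w' have yx: "y \<noteq> x" "y \<notin> set zs" "y \<in> set xs" by auto
    show False
    proof (cases "y < x")
      case True
      then have "(y,x) \<in> inv_set (x#xs)" using yx by (simp add: inv_set_Cons)
      moreover have "(y,x) \<notin> inv_set w'" using w' yx Cons.prems inv_set_subset[of ys] inv_set_subset[of zs]
        by (auto simp: inv_set_append inv_set_Cons)
      ultimately show False using Cons.prems by simp
    next
      case False
      then have "(x,y) \<in> inv_set w'" using yx y w' by (auto simp: inv_set_append inv_set_Cons)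
      then have "(x,y) \<in> inv_set (x#xs)" using Cons.prems by simp
      then show False using Cons.prems inv_set_subset[of xs] yx False
        by (auto simp: inv_set_Cons)
    qed
  qed
  with w' have w'2: "w' = x # zs" by simp
  have "inv_set xs = inv_set zs"
  proof -
    have A: "inv_set xs = inv_set (x#xs) - {p. fst p = x \<or> snd p = x}"
      using Cons.prems inv_set_subset[of xs] by (auto simp: inv_set_Cons)
    have B: "inv_set zs = inv_set (x#zs) - {p. fst p = x \<or> snd p = x}"
      using Cons.prems w'2 inv_set_subset[of zs] by (auto simp: inv_set_Cons)
    show ?thesis using A B Cons.prems w'2 by simp
  qed
  moreover have "set xs = set zs" using Cons.prems w'2 by auto
  ultimately have "xs = zs" using Cons w'2 by auto
  then show ?case using w'2 by simp
qed

definition PP :: "nat \<Rightarrow> (nat \<times> nat) set" where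
  "PP n = {(a,b). a<b \<and> a \<in> {1..n} \<and> b \<in> {1..n}}"

definition cotr :: "(nat \<times> nat) set \<Rightarrow> bool" where
  "cotr I \<longleftrightarrow> (\<forall>a b c. a<b \<longrightarrow> b<c \<longrightarrow> (a,c)\<in>I \<longrightarrow> (a,b)\<in>I \<or> (b,c)\<in>I)"

definition tct :: "nat \<Rightarrow> (nat \<times> nat) set \<Rightarrow> bool" where
  "tct n I \<longleftrightarrow> I \<subseteq> PP n \<and> trans I \<and> cotr I"

lemma inv_split_lo:
  assumes "distinct (ys @ b # zs)" "a < b"
  shows "(a,b) \<in> inv_set (ys @ b # zs) \<longleftrightarrow> a \<in> set zs"
  using assms inv_set_subset[of ys] inv_set_subset[of zs]
  by (auto simp: inv_set_append inv_set_Cons)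

lemma inv_split_hi:
  assumes "distinct (ys @ b # zs)" "b < c"
  shows "(b,c) \<in> inv_set (ys @ b # zs) \<longleftrightarrow> c \<in> set ys"
  using assms inv_set_subset[of ys] inv_set_subset[of zs]
  by (auto simp: inv_set_append inv_set_Cons)

lemma inv_trans: assumes "distinct w" shows "trans (inv_set w)"
proof (rule transI)
  fix a b c assume ab: "(a,b) \<in> inv_set w" and bc: "(b,c) \<in> inv_set w"
  then have "b \<in> set w" "a < b" "b < c" using inv_set_subset[of w] by auto
  then obtain ys zs where w: "w = ys @ b # zs" by (meson split_list)
  have "a \<in> set zs" using inv_split_lo[of ys b zs a] ab w assms \<open>a<b\<close> by simp
  moreover have "c \<in> set ys" using inv_split_hi[of ys b zs c] bc w assms \<open>b<c\<close> by simp
  ultimately show "(a,c) \<in> inv_set w" using w \<open>a<b\<close> \<open>b<c\<close> by (auto simp: inv_set_append)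
qed

lemma inv_cotr: assumes "distinct w" and "set w = {1..n}" shows "cotr (inv_set w)"
  unfolding cotr_def
proof (intro allI impI)
  fix a b c assume "a<b" "b<c" and ac: "(a,c) \<in> inv_set w"
  then have "a \<in> set w" "c \<in> set w" using inv_set_subset[of w] by auto
  then have "b \<in> set w" using assms \<open>a<b\<close> \<open>b<c\<close> by auto
  then obtain ys zs where w: "w = ys @ b # zs" by (meson split_list)
  show "(a,b) \<in> inv_set w \<or> (b,c) \<in> inv_set w"
  proof (rule ccontr)
    assume "\<not> ?thesis"
    then have "a \<notin> set zs" "c \<notin> set ys" using inv_split_lo[of ys b zs a] inv_split_hi[of ys b zs c]
        w assms \<open>a<b\<close> \<open>b<c\<close> by auto
    moreover have "a \<noteq> b" "c \<noteq> b" using \<open>a<b\<close> \<open>b<c\<close> by auto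
    ultimately have "a \<in> set ys" "c \<in> set zs" using \<open>a \<in> set w\<close> \<open>c \<in> set w\<close> w by auto
    then show False using ac w assms inv_set_subset[of ys] inv_set_subset[of zs]
      by (auto simp: inv_set_append inv_set_Cons)
  qed
qed

lemma perms_tct: "w \<in> perms n \<Longrightarrow> tct n (inv_set w)"
  unfolding tct_def perms_def using inv_trans inv_cotr inv_set_subset[of w]
  by (auto simp: PP_def)

lemma filter_split:
  "sorted_wrt (\<lambda>x y. P x \<longrightarrow> P y) w \<Longrightarrow> w = filter (\<lambda>x. \<not> P x) w @ filter P w"
proof (induction w)
  case Nil then show ?case by simp
next
  case (Cons x xs)
  show ?case
  proof (cases "P x")
    case True
    then have "\<forall>y\<in>set xs. P y" using Cons.prems by simp
    then show ?thesis using True by simp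
  next
    case False then show ?thesis using Cons by simp
  qed
qed

lemma realize: "tct n I \<Longrightarrow> \<exists>w\<in>perms n. inv_set w = I"
proof (induction n arbitrary: I)
  case 0
  then have "I = {}" by (auto simp: tct_def PP_def)
  then show ?case by (auto simp: perms_def intro!: bexI[of _ "[]"])
next
  case (Suc n)
  define I0 where "I0 = I \<inter> PP n"
  have I: "I \<subseteq> PP (Suc n)" "trans I" "cotr I" using Suc.prems by (auto simp: tct_def)
  have "tct n I0" unfolding tct_def
  proof (intro conjI)
    show "I0 \<subseteq> PP n" by (simp add: I0_def)
    show "trans I0" unfolding I0_def using I(1,2)
      by (auto simp: PP_def trans_def)
    show "cotr I0" unfolding I0_def cotr_def using I(1,3) unfolding cotr_def PP_def
      by (auto; meson)
  qed
  then obtain w0 where w0: "w0 \<in> perms n" "inv_set w0 = I0" using Suc.IH by blast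
  define A where "A = {a. (a, Suc n) \<in> I}"
  have dw0: "distinct w0" and sw0: "set w0 = {1..n}" using w0 by (auto simp: perms_def)
  have sw: "sorted_wrt (\<lambda>x y. x \<in> A \<longrightarrow> y \<in> A) w0"
    unfolding sorted_wrt_iff_nth_less
  proof (intro allI impI)
    fix i j assume ij: "i<j" "j < length w0" and xA: "w0 ! i \<in> A"
    define x where "x = w0!i"
    define y where "y = w0!j"
    have xy: "x \<noteq> y" using dw0 ij by (simp add: x_def y_def nth_eq_iff_index_eq)
    have ys: "y \<in> {1..n}" using sw0 ij y_def nth_mem by blast
    show "w0 ! j \<in> A"
    proof (cases "y < x")
      case True
      then have "(y,x) \<in> inv_set w0" unfolding inv_set_def using ij x_def y_def by blast
      then have "(y,x) \<in> I" using w0 I0_def by auto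
      then show ?thesis using xA I(2) unfolding A_def x_def[symmetric] y_def[symmetric]
        by (auto dest: transD)
    next
      case False
      then have "x < y" using xy by simp
      moreover have "y < Suc n" using ys by simp
      ultimately have "(x,y) \<in> I \<or> (y, Suc n) \<in> I" using I(3) xA unfolding cotr_def A_def x_def by blast
      moreover have "(x,y) \<notin> I"
      proof
        assume "(x,y) \<in> I"
        then have "(x,y) \<in> inv_set w0" using w0 I0_def I(1) ys \<open>x<y\<close> by (auto simp: PP_def)
        then obtain i' j' where "i'<j'" "j'<length w0" "w0!i' = y" "w0!j' = x"
          unfolding inv_set_def by blast
        then have "i' = j" "j' = i" using dw0 ij by (auto simp: x_def y_def nth_eq_iff_index_eq)
        then show False using \<open>i'<j'\<close> ij by simp
      qed
      ultimately show ?thesis unfolding A_def y_def by blast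
    qed
  qed
  define L1 where "L1 = filter (\<lambda>x. x \<notin> A) w0"
  define L2 where "L2 = filter (\<lambda>x. x \<in> A) w0"
  have w0s: "w0 = L1 @ L2" using filter_split[OF sw] by (simp add: L1_def L2_def)
  define w where "w = L1 @ [Suc n] @ L2"
  have sL2: "set L2 = A"
  proof -
    have "A \<subseteq> {1..n}" using I(1) by (auto simp: A_def PP_def)
    then show ?thesis using sw0 by (auto simp: L2_def)
  qed
  have "set L1 \<subseteq> {1..n}" "set L2 \<subseteq> {1..n}" using sw0 w0s by auto
  then have "Suc n \<notin> set L1" "Suc n \<notin> set L2" by auto
  then have "w \<in> perms (Suc n)"
    using dw0 sw0 w0s by (auto simp: perms_def w_def)
  moreover have "inv_set w = I"
  proof -
    have "inv_set w = inv_set w0 \<union> {(a, Suc n) | a. a \<in> set L2}"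
      using w0s \<open>set L1 \<subseteq> {1..n}\<close> \<open>set L2 \<subseteq> {1..n}\<close>
      by (auto simp: w_def inv_set_append inv_set_Cons)
    also have "\<dots> = I"
    proof -
      have "\<And>a b. (a,b) \<in> I \<Longrightarrow> a < b \<and> 1 \<le> a \<and> b \<le> Suc n" using I(1) by (auto simp: PP_def)
      note H = this
      show ?thesis
      proof (intro set_eqI iffI)
        fix p assume "p \<in> inv_set w0 \<union> {(a, Suc n) | a. a \<in> set L2}"
        then show "p \<in> I" using w0 I0_def sL2 A_def by auto
      next
        fix p assume pI: "p \<in> I"
        obtain a b where p: "p=(a,b)" by (cases p)
        with H pI have ab: "a<b" "1\<le>a" "b \<le> Suc n" by auto
        show "p \<in> inv_set w0 \<union> {(a, Suc n) | a. a \<in> set L2}"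
        proof (cases "b = Suc n")
          case True then show ?thesis using p pI sL2 A_def by auto
        next
          case False then have "b \<le> n" using ab by simp
          then show ?thesis using p pI w0 I0_def ab by (auto simp: PP_def)
        qed
      qed
    qed
    finally show ?thesis .
  qed
  ultimately show ?case by blast
qed

lemma trancl_least: "A \<subseteq> B \<Longrightarrow> trans B \<Longrightarrow> A\<^sup>+ \<subseteq> B"
  by (metis trancl_id trancl_mono subsetI)

lemma trans_PP: "trans (PP n)" by (auto simp: trans_def PP_def)

lemma tct_trancl: assumes "tct n I" "tct n J" shows "tct n ((I \<union> J)\<^sup>+)"
proof -
  have sub: "I \<union> J \<subseteq> PP n" using assms by (auto simp: tct_def)
  have "(I \<union> J)\<^sup>+ \<subseteq> PP n"
    using trancl_mono[OF _ sub] trancl_id[OF trans_PP] by blast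
  moreover have "cotr ((I \<union> J)\<^sup>+)"
    unfolding cotr_def
  proof (intro allI impI)
    fix a b c assume ab: "a < b" and bc: "b < c" and ac: "(a,c) \<in> (I \<union> J)\<^sup>+"
    have cR: "\<And>x y z. x<y \<Longrightarrow> y<z \<Longrightarrow> (x,z) \<in> I \<union> J \<Longrightarrow> (x,y) \<in> I \<union> J \<or> (y,z) \<in> I \<union> J"
      using assms unfolding tct_def cotr_def by blast
    have lt: "\<And>x y. (x,y) \<in> (I \<union> J)\<^sup>+ \<Longrightarrow> x < y"
      using \<open>(I \<union> J)\<^sup>+ \<subseteq> PP n\<close> by (auto simp: PP_def)
    from ac ab bc show "(a,b) \<in> (I \<union> J)\<^sup>+ \<or> (b,c) \<in> (I \<union> J)\<^sup>+"
    proof (induction arbitrary: b rule: trancl_induct)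
      case (base y)
      then show ?case using cR by blast
    next
      case (step y z)
      have ay: "a < y" using step.hyps(1) lt by blast
      show ?case
      proof (cases "b < y")
        case True
        then have "(a,b) \<in> (I \<union> J)\<^sup>+ \<or> (b,y) \<in> (I \<union> J)\<^sup>+" using step.IH step.prems by blast
        then show ?thesis using step.hyps(2) by (meson trancl.trancl_into_trancl)
      next
        case False
        show ?thesis
        proof (cases "b = y")
          case True then show ?thesis using step.hyps(1) by simp
        next
          case False
          then have "y < b" using \<open>\<not> b < y\<close> by simp
          then have "(y,b) \<in> I \<union> J \<or> (b,z) \<in> I \<union> J" using cR step.hyps(2) step.prems by blast
          then show ?thesis using step.hyps(1) by (meson r_into_trancl' trancl.trancl_into_trancl)
        qed
      qed
    qed
  qed
  ultimately show ?thesis by (simp add: tct_def)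
qed

lemma tct_compl: assumes "tct n I" shows "tct n (PP n - I)"
proof -
  have I: "I \<subseteq> PP n" "trans I" "cotr I" using assms by (auto simp: tct_def)
  have "trans (PP n - I)"
  proof (rule transI)
    fix x y z assume "(x,y) \<in> PP n - I" "(y,z) \<in> PP n - I"
    moreover have "(x,z) \<in> PP n" using calculation trans_PP by (meson DiffD1 transD)
    ultimately show "(x,z) \<in> PP n - I" using I(3) unfolding cotr_def PP_def by blast
  qed
  moreover have "cotr (PP n - I)" unfolding cotr_def
  proof (intro allI impI)
    fix a b c assume "a<b" "b<c" "(a,c) \<in> PP n - I"
    moreover then have "(a,b) \<in> PP n" "(b,c) \<in> PP n" by (auto simp: PP_def)
    ultimately show "(a,b) \<in> PP n - I \<or> (b,c) \<in> PP n - I" using I(2) by (meson DiffD2 DiffI transD)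
  qed
  ultimately show ?thesis by (simp add: tct_def)
qed

definition NI :: "nat \<Rightarrow> nat list \<Rightarrow> (nat \<times> nat) set" where
  "NI n w = PP n - inv_set w"

lemma inv_PP: "w \<in> perms n \<Longrightarrow> inv_set w \<subseteq> PP n"
  using perms_tct tct_def by blast

lemma weak_antisym: "s \<in> perms n \<Longrightarrow> t \<in> perms n \<Longrightarrow> weak_le s t \<Longrightarrow> weak_le t s \<Longrightarrow> s = t"
  unfolding weak_le_def perms_def using inv_set_eq_imp_eq by auto

lemma join_spec:
  assumes s: "s \<in> perms n" and t: "t \<in> perms n"
  shows "weak_join n s t \<in> perms n \<and> weak_le s (weak_join n s t) \<and> weak_le t (weak_join n s t) \<and>
      (\<forall>u\<in>perms n. weak_le s u \<and> weak_le t u \<longrightarrow> weak_le (weak_join n s t) u)"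
proof -
  let ?S = "\<lambda>m. m \<in> perms n \<and> weak_le s m \<and> weak_le t m \<and>
      (\<forall>u\<in>perms n. weak_le s u \<and> weak_le t u \<longrightarrow> weak_le m u)"
  have "tct n ((inv_set s \<union> inv_set t)\<^sup>+)" using tct_trancl perms_tct s t by blast
  then obtain m where m: "m \<in> perms n" "inv_set m = (inv_set s \<union> inv_set t)\<^sup>+" using realize by blast
  have "?S m"
  proof (intro conjI)
    show "m \<in> perms n" by fact
    show "weak_le s m" "weak_le t m" using m by (auto simp: weak_le_def)
    show "\<forall>u\<in>perms n. weak_le s u \<and> weak_le t u \<longrightarrow> weak_le m u"
    proof (intro ballI impI)
      fix u assume "u \<in> perms n" "weak_le s u \<and> weak_le t u"
      then have "inv_set s \<union> inv_set t \<subseteq> inv_set u" "trans (inv_set u)"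
        using perms_tct by (auto simp: weak_le_def tct_def)
      then show "weak_le m u" using m unfolding weak_le_def
        using trancl_least by blast
    qed
  qed
  moreover have "\<And>m'. ?S m' \<Longrightarrow> m' = m" using \<open>?S m\<close> weak_antisym by blast
  ultimately have "?S (THE m. ?S m)" by (rule theI)
  then show ?thesis unfolding weak_join_def .
qed

lemma meet_spec:
  assumes s: "s \<in> perms n" and t: "t \<in> perms n"
  shows "weak_meet n s t \<in> perms n \<and> weak_le (weak_meet n s t) s \<and> weak_le (weak_meet n s t) t \<and>
      (\<forall>u\<in>perms n. weak_le u s \<and> weak_le u t \<longrightarrow> weak_le u (weak_meet n s t))"
proof -
  let ?S = "\<lambda>m. m \<in> perms n \<and> weak_le m s \<and> weak_le m t \<and>
      (\<forall>u\<in>perms n. weak_le u s \<and> weak_le u t \<longrightarrow> weak_le u m)"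
  have NI: "\<And>w. w \<in> perms n \<Longrightarrow> tct n (NI n w)" unfolding NI_def using tct_compl perms_tct by blast
  have "tct n (PP n - (NI n s \<union> NI n t)\<^sup>+)" using tct_trancl tct_compl NI s t by blast
  then obtain m where m: "m \<in> perms n" "inv_set m = PP n - (NI n s \<union> NI n t)\<^sup>+" using realize by blast
  have "?S m"
  proof (intro conjI)
    show "m \<in> perms n" by fact
    show "weak_le m s" "weak_le m t" using m by (auto simp: weak_le_def NI_def)
    show "\<forall>u\<in>perms n. weak_le u s \<and> weak_le u t \<longrightarrow> weak_le u m"
    proof (intro ballI impI)
      fix u assume u: "u \<in> perms n" "weak_le u s \<and> weak_le u t"
      then have "NI n s \<union> NI n t \<subseteq> NI n u" "trans (NI n u)"
        using NI by (auto simp: weak_le_def tct_def NI_def)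
      then have "(NI n s \<union> NI n t)\<^sup>+ \<subseteq> NI n u" using trancl_least by blast
      then show "weak_le u m" using m inv_PP[OF u(1)] unfolding weak_le_def NI_def by blast
    qed
  qed
  moreover have "\<And>m'. ?S m' \<Longrightarrow> m' = m" using \<open>?S m\<close> weak_antisym by blast
  ultimately have "?S (THE m. ?S m)" by (rule theI)
  then show ?thesis unfolding weak_meet_def .
qed

definition wit :: "deco list \<Rightarrow> nat \<Rightarrow> nat \<Rightarrow> nat list \<Rightarrow> nat list \<Rightarrow> bool" where
  "wit \<delta> a c U R \<longleftrightarrow> (\<exists>b. a<b \<and> b<c \<and> ((down_dec \<delta> b \<and> b \<in> set R) \<or> (up_dec \<delta> b \<and> b \<in> set U)))"

definition cedge :: "deco list \<Rightarrow> nat list \<Rightarrow> nat list \<Rightarrow> bool" where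
  "cedge \<delta> x y \<longleftrightarrow> (\<exists>U R a c. a<c \<and> x = U@[a,c]@R \<and> y = U@[c,a]@R \<and> wit \<delta> a c U R)"

lemma cedge_step: assumes "cedge \<delta> x y" shows "ptree_step \<delta> x y" "ptree_step \<delta> y x"
proof -
  obtain U R a c b where e: "a<c" "x = U@[a,c]@R" "y = U@[c,a]@R" "a<b" "b<c"
    "(down_dec \<delta> b \<and> b \<in> set R) \<or> (up_dec \<delta> b \<and> b \<in> set U)"
    using assms unfolding cedge_def wit_def by blast
  have "ptree_step \<delta> x y \<and> ptree_step \<delta> y x"
  proof (cases "down_dec \<delta> b \<and> b \<in> set R")
    case True
    then obtain V W where "R = V @ b # W" by (meson split_list)
    then show ?thesis using e True ptree_step.down_ac[of a b c \<delta> U V W] ptree_step.down_ca[of a b c \<delta> U V W]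
      by simp
  next
    case False
    then have "up_dec \<delta> b" "b \<in> set U" using e by auto
    then obtain V W where "U = V @ b # W" by (meson split_list)
    then show ?thesis using e \<open>up_dec \<delta> b\<close> ptree_step.up_ac[of a b c \<delta> V W R] ptree_step.up_ca[of a b c \<delta> V W R]
      by simp
  qed
  then show "ptree_step \<delta> x y" "ptree_step \<delta> y x" by auto
qed

lemma step_cedge: "ptree_step \<delta> x y \<Longrightarrow> cedge \<delta> x y \<or> cedge \<delta> y x"
proof (induction rule: ptree_step.induct)
  case (down_ac a b c U V W)
  then have "cedge \<delta> (U @ [a, c] @ V @ [b] @ W) (U @ [c, a] @ V @ [b] @ W)"
    unfolding cedge_def wit_def by (intro exI[of _ U] exI[of _ "V@[b]@W"] exI[of _ a] exI[of _ c]) auto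
  then show ?case by simp
next
  case (down_ca a b c U V W)
  then have "cedge \<delta> (U @ [a, c] @ V @ [b] @ W) (U @ [c, a] @ V @ [b] @ W)"
    unfolding cedge_def wit_def by (intro exI[of _ U] exI[of _ "V@[b]@W"] exI[of _ a] exI[of _ c]) auto
  then show ?case by simp
next
  case (up_ac a b c U V W)
  then have "cedge \<delta> (U @ [b] @ V @ [a, c] @ W) (U @ [b] @ V @ [c, a] @ W)"
    unfolding cedge_def wit_def by (intro exI[of _ "U@[b]@V"] exI[of _ W] exI[of _ a] exI[of _ c]) auto
  then show ?case by simp
next
  case (up_ca a b c U V W)
  then have "cedge \<delta> (U @ [b] @ V @ [a, c] @ W) (U @ [b] @ V @ [c, a] @ W)"
    unfolding cedge_def wit_def by (intro exI[of _ "U@[b]@V"] exI[of _ W] exI[of _ a] exI[of _ c]) auto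
  then show ?case by simp
qed

lemma step_sym: "ptree_step \<delta> x y \<Longrightarrow> ptree_step \<delta> y x"
  using step_cedge cedge_step by blast

lemma swap_perms: "U@[a,c]@R \<in> perms n \<longleftrightarrow> U@[c,a]@R \<in> perms n"
  by (auto simp: perms_def)

lemma step_perms: "ptree_step \<delta> x y \<Longrightarrow> x \<in> perms n \<Longrightarrow> y \<in> perms n"
  by (induction rule: ptree_step.induct) (auto simp: perms_def)

lemma swap_inv: assumes "a < c"
  shows "inv_set (U@[c,a]@R) = inv_set (U@[a,c]@R) \<union> {(a,c)}"
  using assms by (auto simp: inv_set_append inv_set_Cons)

lemma swap_notin: assumes "distinct (U@[a,c]@R)" shows "(a,c) \<notin> inv_set (U@[a,c]@R)"
  using assms inv_set_subset[of U] inv_set_subset[of R] by (auto simp: inv_set_append inv_set_Cons)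

lemma cedge_le: "cedge \<delta> x y \<Longrightarrow> weak_le x y"
  unfolding cedge_def weak_le_def using swap_inv by blast

definition hgt :: "nat list \<Rightarrow> nat" where "hgt w = card (inv_set w)"

lemma finite_inv: "finite (inv_set w)"
  by (rule finite_subset[OF inv_set_subset]) (auto intro: finite_subset[of _ "set w \<times> set w"])

lemma hgt_mono: "weak_le x y \<Longrightarrow> hgt x \<le> hgt y"
  unfolding hgt_def weak_le_def by (simp add: card_mono finite_inv)

lemma hgt_strict: "x \<in> perms n \<Longrightarrow> y \<in> perms n \<Longrightarrow> weak_le x y \<Longrightarrow> x \<noteq> y \<Longrightarrow> hgt x < hgt y"
proof -
  assume a: "x \<in> perms n" "y \<in> perms n" "weak_le x y" "x \<noteq> y"
  then have "inv_set x \<noteq> inv_set y" using inv_set_eq_imp_eq by (auto simp: perms_def)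
  then have "inv_set x \<subset> inv_set y" using a(3) by (auto simp: weak_le_def)
  then show ?thesis unfolding hgt_def by (simp add: psubset_card_mono finite_inv)
qed

lemma cedge_hgt: assumes "cedge \<delta> x y" "x \<in> perms n" shows "hgt y = Suc (hgt x)"
proof -
  obtain U R a c where e: "a<c" "x = U@[a,c]@R" "y = U@[c,a]@R"
    using assms unfolding cedge_def by blast
  have "(a,c) \<notin> inv_set x" using swap_notin assms e by (auto simp: perms_def)
  then show ?thesis using swap_inv[OF e(1), of U R] e by (simp add: hgt_def finite_inv)
qed

definition bef :: "(nat \<times> nat) set \<Rightarrow> nat \<Rightarrow> nat \<Rightarrow> bool" where
  "bef I y z \<longleftrightarrow> (y<z \<and> (y,z) \<notin> I) \<or> (z<y \<and> (z,y) \<in> I)"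

lemma bef_transp: assumes "trans I" "cotr I" shows "transp (bef I)"
proof (rule transpI)
  fix y z w assume yz: "bef I y z" and zw: "bef I z w"
  have tr: "\<And>p q r. (p,q) \<in> I \<Longrightarrow> (q,r) \<in> I \<Longrightarrow> (p,r) \<in> I" using assms(1) by (meson transD)
  have co: "\<And>p q r. p<q \<Longrightarrow> q<r \<Longrightarrow> (p,r) \<in> I \<Longrightarrow> (p,q) \<in> I \<or> (q,r) \<in> I"
    using assms(2) unfolding cotr_def by blast
  show "bef I y w"
  proof (cases "y < z")
    case yz1: True
    then have nyz: "(y,z) \<notin> I" using yz unfolding bef_def by auto
    show ?thesis
    proof (cases "z < w")
      case True
      then have "(z,w) \<notin> I" using zw unfolding bef_def by auto
      then show ?thesis using co[of y z w] nyz yz1 True unfolding bef_def by auto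
    next
      case False
      then have wz: "w < z" "(w,z) \<in> I" using zw unfolding bef_def by auto
      consider "y < w" | "y = w" | "w < y" by linarith
      then show ?thesis
      proof cases
        case 1 then show ?thesis using tr[of y w z] wz nyz unfolding bef_def by auto
      next
        case 2 then show ?thesis using wz nyz by simp
      next
        case 3 then show ?thesis using co[of w y z] wz nyz yz1 unfolding bef_def by auto
      qed
    qed
  next
    case False
    then have zy: "z < y" "(z,y) \<in> I" using yz unfolding bef_def by auto
    show ?thesis
    proof (cases "z < w")
      case True
      then have nzw: "(z,w) \<notin> I" using zw unfolding bef_def by auto
      consider "y < w" | "y = w" | "w < y" by linarith
      then show ?thesis
      proof cases
        case 1 then show ?thesis using tr[of z y w] zy nzw unfolding bef_def by auto
      next
        case 2 then show ?thesis using zy nzw by simp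
      next
        case 3 then show ?thesis using co[of z w y] zy nzw True unfolding bef_def by auto
      qed
    next
      case False
      then have wz: "w < z" "(w,z) \<in> I" using zw unfolding bef_def by auto
      then show ?thesis using tr[of w z y] zy unfolding bef_def by auto
    qed
  qed
qed

lemma take_nth2: "Suc i < length x \<Longrightarrow> x = take i x @ [x!i, x!Suc i] @ drop (Suc (Suc i)) x"
  by (metis Cons_nth_drop_Suc Suc_lessD append_Cons append_Nil append_take_drop_id)

lemma exists_ascent:
  assumes x: "x \<in> perms n" and t: "t \<in> perms n" and le: "weak_le x t" and ne: "x \<noteq> t"
  shows "\<exists>U R p q. p<q \<and> x = U@[p,q]@R \<and> (p,q) \<in> inv_set t"
proof (rule ccontr)
  assume H: "\<not> ?thesis"
  have tt: "trans (inv_set t)" "cotr (inv_set t)" using perms_tct[OF t] by (auto simp: tct_def)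
  have dx: "distinct x" using x by (simp add: perms_def)
  have "\<forall>i. Suc i < length x \<longrightarrow> bef (inv_set t) (x!i) (x!Suc i)"
  proof (intro allI impI)
    fix i assume i: "Suc i < length x"
    let ?U = "take i x" and ?R = "drop (Suc (Suc i)) x"
    have xs: "x = ?U @ [x!i, x!Suc i] @ ?R" using take_nth2[OF i] .
    have "x!i \<noteq> x!Suc i" using dx i by (simp add: nth_eq_iff_index_eq)
    then consider "x!i < x!Suc i" | "x!Suc i < x!i" by linarith
    then show "bef (inv_set t) (x!i) (x!Suc i)"
    proof cases
      case 1 then show ?thesis using H xs unfolding bef_def by blast
    next
      case 2
      then have "(x!Suc i, x!i) \<in> inv_set x" using swap_inv[OF 2, of ?U ?R] xs by auto
      then show ?thesis using le 2 unfolding weak_le_def bef_def by blast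
    qed
  qed
  then have sw: "sorted_wrt (bef (inv_set t)) x"
    using sorted_wrt_iff_nth_Suc_transp[OF bef_transp[OF tt]] by blast
  have "inv_set t \<subseteq> inv_set x"
  proof
    fix p assume pt: "p \<in> inv_set t"
    obtain a b where p: "p = (a,b)" by (cases p)
    have ab: "a<b" "a \<in> set x" "b \<in> set x" using pt p inv_set_subset[of t] x t by (auto simp: perms_def)
    show "p \<in> inv_set x"
    proof (rule ccontr)
      assume np: "p \<notin> inv_set x"
      obtain i where i: "i < length x" "x!i = a" using ab by (meson in_set_conv_nth)
      obtain j where j: "j < length x" "x!j = b" using ab by (meson in_set_conv_nth)
      have "i \<noteq> j" using i j ab by auto
      moreover have "\<not> j < i" using np p i j ab unfolding inv_set_def by blast
      ultimately have "i < j" by simp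
      then have "bef (inv_set t) a b" using sw i j unfolding sorted_wrt_iff_nth_less by blast
      then show False using pt p ab unfolding bef_def by auto
    qed
  qed
  then have "inv_set x = inv_set t" using le by (auto simp: weak_le_def)
  then show False using ne inv_set_eq_imp_eq x t by (auto simp: perms_def)
qed

lemma win_sub: "set M = set M' \<Longrightarrow> inv_set (U@M@R) \<subseteq> inv_set (U@M'@R) \<union> inv_set M"
  by (auto simp: inv_set_append)

lemma win_in: "inv_set M \<subseteq> inv_set (U@M@R)"
  by (auto simp: inv_set_append)

lemma inv3: "a<b \<Longrightarrow> b<c \<Longrightarrow> inv_set [c,b,a] = {(a,b),(a,c),(b,c)}"
  by (auto simp: inv_set_Cons)

lemma chain2: "r a b \<Longrightarrow> r b c \<Longrightarrow> r\<^sup>*\<^sup>* a c"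
  by (meson r_into_rtranclp rtranclp.rtrancl_into_rtrancl)

lemma polygon:
  assumes x: "x \<in> perms n" and e: "cedge \<delta> x y" and xu: "x = U'@[p,q]@R'" and pq: "p<q"
    and u: "u = U'@[q,p]@R'" and uy: "u \<noteq> y"
  shows "\<exists>P \<in> perms n. weak_le y P \<and> (\<forall>z\<in>perms n. weak_le u z \<and> weak_le y z \<longrightarrow> weak_le P z)
     \<and> (\<lambda>a b. cedge \<delta> a b \<and> weak_le b P)\<^sup>*\<^sup>* u P"
proof -
  obtain U R a c where ac: "a<c" and xe: "x = U@[a,c]@R" and ye: "y = U@[c,a]@R" and w: "wit \<delta> a c U R"
    using e unfolding cedge_def by blast
  obtain b where b: "a<b" "b<c" "(down_dec \<delta> b \<and> b \<in> set R) \<or> (up_dec \<delta> b \<and> b \<in> set U)"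
    using w unfolding wit_def by blast
  have dx: "distinct x" using x by (simp add: perms_def)
  have eq: "U@([a,c]@R) = U'@([p,q]@R')" using xe xu by simp
  have trz: "\<And>z. z \<in> perms n \<Longrightarrow> trans (inv_set z)" using perms_tct tct_def by blast
  have permsI: "\<And>P. set P = set x \<Longrightarrow> distinct P \<Longrightarrow> P \<in> perms n" using x by (simp add: perms_def)
  from append_eq_append_conv2[THEN iffD1, OF eq] obtain us where
    "(U = U' @ us \<and> us @ [a,c] @ R = [p,q] @ R') \<or> (U @ us = U' \<and> [a,c] @ R = us @ [p,q] @ R')"
    by blast
  then show ?thesis
  proof
    assume A: "U = U' @ us \<and> us @ [a,c] @ R = [p,q] @ R'"
    show ?thesis
    proof (cases us)
      case Nil then show ?thesis using A xu u ye uy by simp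
    next
      case (Cons u1 us1)
      show ?thesis
      proof (cases us1)
        case Nil
        then have s: "U = U'@[p]" "q = a" "R' = c#R" using A Cons by auto
        have pa: "p < a" using pq s by simp
        define P where "P = U'@[c,a,p]@R"
        define m1 where "m1 = U'@[a,c,p]@R"
        have xs: "x = U'@[p,a,c]@R" using xe s by simp
        have us: "u = U'@[a,p,c]@R" using u s by simp
        have ys: "y = U'@[p,c,a]@R" using ye s by simp
        have bp: "b \<noteq> p" using b pa by simp
        have c1: "cedge \<delta> u m1" unfolding cedge_def wit_def
          apply (rule exI[of _ "U'@[a]"], rule exI[of _ R], rule exI[of _ p], rule exI[of _ c])
          using us m1_def pa ac b s by (auto intro!: exI[of _ b])
        have c2: "cedge \<delta> m1 P" unfolding cedge_def wit_def
          apply (rule exI[of _ "U'"], rule exI[of _ "p#R"], rule exI[of _ a], rule exI[of _ c])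
          using P_def m1_def ac b s bp by (auto intro!: exI[of _ b])
        have Pp: "P \<in> perms n" using dx xs by (intro permsI) (auto simp: P_def)
        have I3: "inv_set [c,a,p] = {(p,a),(p,c),(a,c)}" using inv3[OF pa ac] by auto
        have acP: "(a,c) \<in> inv_set P" using win_in[of "[c,a,p]" U' R] I3 P_def by auto
        have "set [p,c,a] = set [c,a,p]" by auto
        from win_sub[OF this, of U' R] have "inv_set y \<subseteq> inv_set P \<union> inv_set [p,c,a]" using ys P_def by simp
        moreover have "inv_set [p,c,a] = {(a,c)}" using pa ac by (auto simp: inv_set_Cons)
        ultimately have yP: "weak_le y P" using acP unfolding weak_le_def by auto
        have least: "\<forall>z\<in>perms n. weak_le u z \<and> weak_le y z \<longrightarrow> weak_le P z"
        proof (intro ballI impI)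
          fix z assume z: "z \<in> perms n" "weak_le u z \<and> weak_le y z"
          have "(a,c) \<in> inv_set z" using z win_in[of "[c,a]" U R] ye ac unfolding weak_le_def by (auto simp: inv_set_Cons)
          moreover have "(p,a) \<in> inv_set z" using z win_in[of "[a,p,c]" U' R] us pa
            unfolding weak_le_def by (auto simp: inv_set_Cons)
          ultimately have "(p,c) \<in> inv_set z" using trz[OF z(1)] by (meson transD)
          then show "weak_le P z"
            using win_sub[of "[c,a,p]" "[p,c,a]" U' R] I3 z \<open>(a,c) \<in> inv_set z\<close> \<open>(p,a) \<in> inv_set z\<close>
              ys P_def unfolding weak_le_def by auto
        qed
        have "weak_le m1 P" using cedge_le[OF c2] .
        moreover have "weak_le P P" by (simp add: weak_le_def)
        have "(\<lambda>a b. cedge \<delta> a b \<and> weak_le b P)\<^sup>*\<^sup>* u P"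
          by (rule chain2[of _ u m1]) (use c1 c2 \<open>weak_le m1 P\<close> \<open>weak_le P P\<close> in auto)
        then show ?thesis using Pp yP least by blast
      next
        case (Cons u2 us2)
        then have s: "U = U'@[p,q]@us2" "R' = us2@[a,c]@R" using A \<open>us = u1#us1\<close> by auto
        define P where "P = U'@[q,p]@us2@[c,a]@R"
        have c1: "cedge \<delta> u P" unfolding cedge_def wit_def
          apply (rule exI[of _ "U'@[q,p]@us2"], rule exI[of _ R], rule exI[of _ a], rule exI[of _ c])
          using u P_def ac b s by (auto intro!: exI[of _ b])
        have Pp: "P \<in> perms n" using dx xe s by (intro permsI) (auto simp: P_def)
        have yP: "inv_set P = inv_set y \<union> {(p,q)}"
          using swap_inv[OF pq, of U' "us2@[c,a]@R"] ye s P_def by simp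
        have uP: "(p,q) \<in> inv_set u" using swap_inv[OF pq, of U' R'] u by simp
        have least: "\<forall>z\<in>perms n. weak_le u z \<and> weak_le y z \<longrightarrow> weak_le P z"
          using yP uP unfolding weak_le_def by (auto intro!: exI[of _ b])
        have "(\<lambda>a b. cedge \<delta> a b \<and> weak_le b P)\<^sup>*\<^sup>* u P" using c1 by (simp add: weak_le_def r_into_rtranclp)
        then show ?thesis using Pp yP least unfolding weak_le_def by blast
      qed
    qed
  next
    assume B: "U @ us = U' \<and> [a,c] @ R = us @ [p,q] @ R'"
    show ?thesis
    proof (cases us)
      case Nil then show ?thesis using B xu u ye uy by simp
    next
      case (Cons u1 us1)
      show ?thesis
      proof (cases us1)
        case Nil
        then have s: "U' = U@[a]" "p = c" "R = q#R'" using B Cons by auto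
        have cq: "c < q" using pq s by simp
        define P where "P = U@[q,c,a]@R'"
        define m1 where "m1 = U@[q,a,c]@R'"
        have xs: "x = U@[a,c,q]@R'" using xe s by simp
        have us: "u = U@[a,q,c]@R'" using u s by simp
        have ys: "y = U@[c,a,q]@R'" using ye s by simp
        have bq: "b \<noteq> q" using b cq by simp
        have c1: "cedge \<delta> u m1" unfolding cedge_def wit_def
          apply (rule exI[of _ "U"], rule exI[of _ "c#R'"], rule exI[of _ a], rule exI[of _ q])
          using us m1_def cq ac b s by (auto intro!: exI[of _ b])
        have c2: "cedge \<delta> m1 P" unfolding cedge_def wit_def
          apply (rule exI[of _ "U@[q]"], rule exI[of _ "R'"], rule exI[of _ a], rule exI[of _ c])
          using P_def m1_def ac b s bq by (auto intro!: exI[of _ b])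
        have Pp: "P \<in> perms n" using dx xs by (intro permsI) (auto simp: P_def)
        have I3: "inv_set [q,c,a] = {(a,c),(a,q),(c,q)}" using inv3[OF ac cq] by auto
        have acP: "(a,c) \<in> inv_set P" using win_in[of "[q,c,a]" U R'] I3 P_def by auto
        have "set [c,a,q] = set [q,c,a]" by auto
        from win_sub[OF this, of U R'] have "inv_set y \<subseteq> inv_set P \<union> inv_set [c,a,q]" using ys P_def by simp
        moreover have "inv_set [c,a,q] = {(a,c)}" using cq ac by (auto simp: inv_set_Cons)
        ultimately have yP: "weak_le y P" using acP unfolding weak_le_def by auto
        have least: "\<forall>z\<in>perms n. weak_le u z \<and> weak_le y z \<longrightarrow> weak_le P z"
        proof (intro ballI impI)
          fix z assume z: "z \<in> perms n" "weak_le u z \<and> weak_le y z"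
          have "(a,c) \<in> inv_set z" using z win_in[of "[c,a]" U R] ye ac unfolding weak_le_def by (auto simp: inv_set_Cons)
          moreover have "(c,q) \<in> inv_set z" using z win_in[of "[a,q,c]" U R'] us cq
            unfolding weak_le_def by (auto simp: inv_set_Cons)
          ultimately have "(a,q) \<in> inv_set z" using trz[OF z(1)] by (meson transD)
          then show "weak_le P z"
            using win_sub[of "[q,c,a]" "[c,a,q]" U R'] I3 z \<open>(a,c) \<in> inv_set z\<close> \<open>(c,q) \<in> inv_set z\<close>
              ys P_def unfolding weak_le_def by auto
        qed
        have "weak_le m1 P" using cedge_le[OF c2] .
        moreover have "weak_le P P" by (simp add: weak_le_def)
        have "(\<lambda>a b. cedge \<delta> a b \<and> weak_le b P)\<^sup>*\<^sup>* u P"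
          by (rule chain2[of _ u m1]) (use c1 c2 \<open>weak_le m1 P\<close> \<open>weak_le P P\<close> in auto)
        then show ?thesis using Pp yP least by blast
      next
        case (Cons u2 us2)
        then have s: "U' = U@[a,c]@us2" "R = us2@[p,q]@R'" using B \<open>us = u1#us1\<close> by auto
        define P where "P = U@[c,a]@us2@[q,p]@R'"
        have c1: "cedge \<delta> u P" unfolding cedge_def wit_def
          apply (rule exI[of _ "U"], rule exI[of _ "us2@[q,p]@R'"], rule exI[of _ a], rule exI[of _ c])
          using u P_def ac b s by (auto intro!: exI[of _ b])
        have Pp: "P \<in> perms n" using dx xe s by (intro permsI) (auto simp: P_def)
        have yP: "inv_set P = inv_set y \<union> {(p,q)}"
          using swap_inv[OF pq, of "U@[c,a]@us2" R'] ye s P_def by simp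
        have uP: "(p,q) \<in> inv_set u" using swap_inv[OF pq, of U' R'] u by simp
        have least: "\<forall>z\<in>perms n. weak_le u z \<and> weak_le y z \<longrightarrow> weak_le P z"
          using yP uP unfolding weak_le_def by (auto intro!: exI[of _ b])
        have "(\<lambda>a b. cedge \<delta> a b \<and> weak_le b P)\<^sup>*\<^sup>* u P" using c1 by (simp add: weak_le_def r_into_rtranclp)
        then show ?thesis using Pp yP least unfolding weak_le_def by blast
      qed
    qed
  qed
qed

abbreviation J where "J n s t \<equiv> weak_join n s t"

lemma wle_refl[simp]: "weak_le s s" by (simp add: weak_le_def)
lemma wle_trans: "weak_le a b \<Longrightarrow> weak_le b c \<Longrightarrow> weak_le a c" by (auto simp: weak_le_def)

lemma join_eqI:
  assumes "s \<in> perms n" "t \<in> perms n" "m \<in> perms n" "weak_le s m" "weak_le t m"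
    "\<forall>u\<in>perms n. weak_le s u \<and> weak_le t u \<longrightarrow> weak_le m u"
  shows "weak_join n s t = m"
  using join_spec[OF assms(1,2)] assms weak_antisym by blast

lemma join_comm: "s \<in> perms n \<Longrightarrow> t \<in> perms n \<Longrightarrow> J n s t = J n t s"
  using join_spec[of s n t] join_spec[of t n s] join_eqI[of s n t "J n t s"] by blast

lemma join_absorb: "s \<in> perms n \<Longrightarrow> t \<in> perms n \<Longrightarrow> weak_le s t \<Longrightarrow> J n t s = t"
  by (rule join_eqI) auto

lemma join_assoc_le: assumes "s \<in> perms n" "t \<in> perms n" "q \<in> perms n" "weak_le s q"
  shows "J n (J n t s) q = J n t q"
proof -
  have j1: "J n t s \<in> perms n" "weak_le t (J n t s)" "weak_le s (J n t s)"
    "\<forall>u\<in>perms n. weak_le t u \<and> weak_le s u \<longrightarrow> weak_le (J n t s) u" using join_spec[OF assms(2,1)] by auto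
  have j2: "J n t q \<in> perms n" "weak_le t (J n t q)" "weak_le q (J n t q)"
    "\<forall>u\<in>perms n. weak_le t u \<and> weak_le q u \<longrightarrow> weak_le (J n t q) u" using join_spec[OF assms(2,3)] by auto
  show ?thesis
  proof (rule join_eqI)
    show "weak_le (J n t s) (J n t q)" using j1 j2 assms(4) wle_trans by blast
    show "\<forall>u\<in>perms n. weak_le (J n t s) u \<and> weak_le q u \<longrightarrow> weak_le (J n t q) u"
      using j1 j2 wle_trans by blast
  qed (use j1 j2 assms in auto)
qed

lemma cedge_perms: "cedge \<delta> x y \<Longrightarrow> x \<in> perms n \<Longrightarrow> y \<in> perms n"
  using cedge_step step_perms by blast

lemma lemmaA:
  "\<forall>x y t. x \<in> perms n \<and> t \<in> perms n \<and> cedge \<delta> x y \<and> weak_le x t \<and> hgt (J n t y) - hgt x = k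
     \<longrightarrow> ptree_cong \<delta> t (J n t y)"
proof (induction k rule: less_induct)
  case (less k)
  show ?case
  proof (intro allI impI, elim conjE)
    fix x y t assume x: "x \<in> perms n" and t: "t \<in> perms n" and e: "cedge \<delta> x y"
      and xt: "weak_le x t" and k: "hgt (J n t y) - hgt x = k"
    have y: "y \<in> perms n" using cedge_perms e x by blast
    have jty: "J n t y \<in> perms n" "weak_le t (J n t y)" "weak_le y (J n t y)"
      "\<forall>u\<in>perms n. weak_le t u \<and> weak_le y u \<longrightarrow> weak_le (J n t y) u" using join_spec[OF t y] by auto
    show "ptree_cong \<delta> t (J n t y)"
    proof (cases "weak_le y t")
      case True
      then have "J n t y = t" using join_absorb[OF y t] by simp
      then show ?thesis by (simp add: ptree_cong_def)
    next
      case nyt: False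
      show ?thesis
      proof (cases "x = t")
        case True
        then have "J n t y = y" using join_comm[OF t y] join_absorb[OF t y] cedge_le[OF e] by simp
        then show ?thesis using True cedge_step(1)[OF e] by (simp add: ptree_cong_def)
      next
        case False
        obtain U' R' p q where pq: "p<q" "x = U'@[p,q]@R'" "(p,q) \<in> inv_set t"
          using exists_ascent[OF x t xt False] by blast
        define u where "u = U'@[q,p]@R'"
        have u: "u \<in> perms n" using x pq swap_perms u_def by blast
        have invu: "inv_set u = inv_set x \<union> {(p,q)}" using swap_inv[OF pq(1)] pq u_def by simp
        have ut: "weak_le u t" using invu xt pq unfolding weak_le_def by auto
        have uy: "u \<noteq> y" using ut nyt by auto
        have xu: "weak_le x u" using invu by (auto simp: weak_le_def)
        have hxu: "hgt x < hgt u"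
          using hgt_strict[OF x u xu] swap_notin[of U' p q R'] x pq invu by (auto simp: perms_def)
        obtain P where P: "P \<in> perms n" "weak_le y P"
          "\<forall>z\<in>perms n. weak_le u z \<and> weak_le y z \<longrightarrow> weak_le P z"
          and ch: "(\<lambda>a b. cedge \<delta> a b \<and> weak_le b P)\<^sup>*\<^sup>* u P"
          using polygon[OF x e pq(2) pq(1) u_def uy] by blast
        have PJ: "weak_le P (J n t y)" using P(3) jty ut wle_trans by blast
        have hJ: "hgt u \<le> hgt (J n t y)" using hgt_mono wle_trans[OF ut jty(2)] by blast
        have claim: "ptree_cong \<delta> t (J n t r) \<and> weak_le u r \<and> r \<in> perms n"
          if "(\<lambda>a b. cedge \<delta> a b \<and> weak_le b P)\<^sup>*\<^sup>* u r" for r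
          using that
        proof (induction rule: rtranclp_induct)
          case base
          then show ?case using join_absorb[OF u t ut] u by (simp add: ptree_cong_def)
        next
          case (step q1 q2)
          have q1: "q1 \<in> perms n" "weak_le u q1" "ptree_cong \<delta> t (J n t q1)" using step.IH by auto
          have e2: "cedge \<delta> q1 q2" "weak_le q2 P" using step.hyps by auto
          have q2: "q2 \<in> perms n" using cedge_perms e2(1) q1(1) by blast
          have uq2: "weak_le u q2" using q1(2) cedge_le[OF e2(1)] wle_trans by blast
          have jtq1: "J n t q1 \<in> perms n" "weak_le q1 (J n t q1)" using join_spec[OF t q1(1)] by auto
          have eqJ: "J n (J n t q1) q2 = J n t q2"
            using join_assoc_le[OF q1(1) t q2 cedge_le[OF e2(1)]] .
          have jtq2: "J n t q2 \<in> perms n" "weak_le (J n t q2) (J n t y)"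
            using join_spec[OF t q2] jty PJ e2(2) wle_trans by blast+
          have h1: "hgt (J n t q2) \<le> hgt (J n t y)" using hgt_mono jtq2(2) by blast
          have h2: "hgt u \<le> hgt q1" using hgt_mono q1(2) by blast
          have "hgt x \<le> hgt (J n t y)" using hxu hJ by simp
          then have lt: "hgt (J n (J n t q1) q2) - hgt q1 < k" unfolding eqJ using h1 h2 hxu hJ k by linarith
          have "ptree_cong \<delta> (J n t q1) (J n (J n t q1) q2)"
            using less.IH[OF lt] q1(1) jtq1 e2(1) by blast
          then have "ptree_cong \<delta> (J n t q1) (J n t q2)" using eqJ by simp
          then have "ptree_cong \<delta> t (J n t q2)" using q1(3) unfolding ptree_cong_def by simp
          then show ?case using uq2 q2 by blast
        qed
        have "ptree_cong \<delta> t (J n t P)" using claim[OF ch] by blast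
        moreover have "J n t P = J n t y"
        proof (rule join_eqI[OF t P(1) jty(1)])
          show "weak_le t (J n t y)" by (rule jty(2))
          show "weak_le P (J n t y)" by (rule PJ)
          show "\<forall>u\<in>perms n. weak_le t u \<and> weak_le P u \<longrightarrow> weak_le (J n t y) u"
            using jty(4) P(2) wle_trans by blast
        qed
        ultimately show ?thesis by simp
      qed
    qed
  qed
qed

lemma join_cedge: assumes "x \<in> perms n" "t \<in> perms n" "cedge \<delta> x y"
  shows "ptree_cong \<delta> (J n x t) (J n y t)"
proof -
  have y: "y \<in> perms n" using cedge_perms assms by blast
  have jx: "J n x t \<in> perms n" "weak_le x (J n x t)" using join_spec[OF assms(1,2)] by auto
  have "ptree_cong \<delta> (J n x t) (J n (J n x t) y)"
    using lemmaA[of n \<delta> "hgt (J n (J n x t) y) - hgt x"] assms jx by blast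
  moreover have "J n (J n x t) y = J n y t"
    using join_assoc_le[OF assms(1) assms(2) y cedge_le[OF assms(3)]] join_comm[OF assms(1,2)]
      join_comm[OF y assms(2)] by simp
  ultimately show ?thesis by simp
qed

lemma cong_sym: "ptree_cong \<delta> a b \<Longrightarrow> ptree_cong \<delta> b a"
  unfolding ptree_cong_def
proof (induction rule: rtranclp_induct)
  case base then show ?case by simp
next
  case (step y z) then show ?case using step_sym
    by (meson converse_rtranclp_into_rtranclp)
qed

lemma cong_trans: "ptree_cong \<delta> a b \<Longrightarrow> ptree_cong \<delta> b c \<Longrightarrow> ptree_cong \<delta> a c"
  unfolding ptree_cong_def by simp

lemma join_cong1: assumes "ptree_cong \<delta> s s'" "s \<in> perms n" "t \<in> perms n"
  shows "ptree_cong \<delta> (J n s t) (J n s' t)"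
proof -
  have "(ptree_step \<delta>)\<^sup>*\<^sup>* s s'" using assms(1) by (simp add: ptree_cong_def)
  then show ?thesis using assms(2)
proof (induction rule: rtranclp_induct)
  case base then show ?case by (simp add: ptree_cong_def)
next
  case (step y z)
  have yp: "y \<in> perms n"
    using step.hyps(1) step.prems
  proof (induction rule: rtranclp_induct)
    case base then show ?case by simp
  next
    case (step a b) then show ?case using step_perms by blast
  qed
  have "ptree_cong \<delta> (J n y t) (J n z t)"
  proof (cases "cedge \<delta> y z")
    case True then show ?thesis using join_cedge yp assms(3) by blast
  next
    case False
    then have "cedge \<delta> z y" using step_cedge step.hyps(2) by blast
    moreover have "z \<in> perms n" using step_perms step.hyps(2) yp by blast
    ultimately show ?thesis using join_cedge assms(3) cong_sym by blast
  qed
  then show ?case using step.IH step.prems cong_trans by blast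
qed
qed

lemma cong_perms: "ptree_cong \<delta> s s' \<Longrightarrow> s \<in> perms n \<Longrightarrow> s' \<in> perms n"
  unfolding ptree_cong_def by (induction rule: rtranclp_induct) (auto intro: step_perms)

lemma join_cong: assumes "ptree_cong \<delta> s s'" "ptree_cong \<delta> t t'" "s \<in> perms n" "t \<in> perms n"
  shows "ptree_cong \<delta> (J n s t) (J n s' t')"
proof -
  have s': "s' \<in> perms n" and t': "t' \<in> perms n" using cong_perms assms by blast+
  have "ptree_cong \<delta> (J n s t) (J n s' t)" using join_cong1 assms by blast
  moreover have "ptree_cong \<delta> (J n t s') (J n t' s')" using join_cong1 assms s' by blast
  ultimately show ?thesis using join_comm s' t' assms cong_trans by metis
qed

lemma inv_rev: "distinct w \<Longrightarrow> inv_set (rev w) = {(a,b). a<b \<and> a \<in> set w \<and> b \<in> set w} - inv_set w"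
proof (induction w)
  case Nil then show ?case by simp
next
  case (Cons x xs)
  then show ?case using inv_set_subset[of xs] by (auto simp: inv_set_append inv_set_Cons)
qed

lemma rev_perms: "w \<in> perms n \<Longrightarrow> rev w \<in> perms n"
  by (simp add: perms_def)

lemma inv_rev_PP: "w \<in> perms n \<Longrightarrow> inv_set (rev w) = PP n - inv_set w"
  using inv_rev[of w] by (auto simp: perms_def PP_def)

lemma wle_rev: "s \<in> perms n \<Longrightarrow> t \<in> perms n \<Longrightarrow> weak_le (rev s) (rev t) \<longleftrightarrow> weak_le t s"
  using inv_rev_PP[of s n] inv_rev_PP[of t n] inv_PP[of s n] inv_PP[of t n]
  unfolding weak_le_def by blast

lemma meet_eqI:
  assumes "s \<in> perms n" "t \<in> perms n" "m \<in> perms n" "weak_le m s" "weak_le m t"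
    "\<forall>u\<in>perms n. weak_le u s \<and> weak_le u t \<longrightarrow> weak_le u m"
  shows "weak_meet n s t = m"
  using meet_spec[OF assms(1,2)] assms weak_antisym by blast

lemma meet_rev: assumes s: "s \<in> perms n" and t: "t \<in> perms n"
  shows "weak_meet n s t = rev (J n (rev s) (rev t))"
proof -
  have rs: "rev s \<in> perms n" and rt: "rev t \<in> perms n" using s t rev_perms by auto
  have j: "J n (rev s) (rev t) \<in> perms n" "weak_le (rev s) (J n (rev s) (rev t))"
    "weak_le (rev t) (J n (rev s) (rev t))"
    "\<forall>u\<in>perms n. weak_le (rev s) u \<and> weak_le (rev t) u \<longrightarrow> weak_le (J n (rev s) (rev t)) u"
    using join_spec[OF rs rt] by auto
  let ?m = "rev (J n (rev s) (rev t))"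
  have m: "?m \<in> perms n" using rev_perms j(1) by blast
  show ?thesis
  proof (rule meet_eqI[OF s t m])
    show "weak_le ?m s" using wle_rev[OF s m] j(2) by simp
    show "weak_le ?m t" using wle_rev[OF t m] j(3) by simp
    show "\<forall>u\<in>perms n. weak_le u s \<and> weak_le u t \<longrightarrow> weak_le u ?m"
    proof (intro ballI impI)
      fix u assume u: "u \<in> perms n" "weak_le u s \<and> weak_le u t"
      then have "weak_le (rev s) (rev u)" "weak_le (rev t) (rev u)" using wle_rev s t by auto
      then have "weak_le (J n (rev s) (rev t)) (rev u)" using j(4) rev_perms[OF u(1)] by blast
      then show "weak_le u ?m" using wle_rev[OF rev_perms[OF u(1)] j(1)] by simp
    qed
  qed
qed

fun swd :: "deco \<Rightarrow> deco" where
  "swd DDown = DUp" | "swd DUp = DDown" | "swd DNone = DNone" | "swd DUpDown = DUpDown"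

definition dd :: "deco list \<Rightarrow> deco list" where "dd \<delta> = map swd \<delta>"

lemma swd_swd[simp]: "swd (swd d) = d" by (cases d) auto

lemma dd_dd[simp]: "dd (dd \<delta>) = \<delta>" by (simp add: dd_def map_idI)

lemma down_dd: "b - 1 < length \<delta> \<Longrightarrow> down_dec (dd \<delta>) b \<longleftrightarrow> up_dec \<delta> b"
  by (cases "\<delta> ! (b-1)") (auto simp: dd_def down_dec_def up_dec_def)

lemma up_dd: "b - 1 < length \<delta> \<Longrightarrow> up_dec (dd \<delta>) b \<longleftrightarrow> down_dec \<delta> b"
  by (cases "\<delta> ! (b-1)") (auto simp: dd_def down_dec_def up_dec_def)

lemma cedge_rev: assumes "cedge \<delta> x y" "x \<in> perms n" "length \<delta> = n"
  shows "cedge (dd \<delta>) (rev y) (rev x)"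
proof -
  obtain U R a c b where e: "a<c" "x = U@[a,c]@R" "y = U@[c,a]@R" "a<b" "b<c"
    "(down_dec \<delta> b \<and> b \<in> set R) \<or> (up_dec \<delta> b \<and> b \<in> set U)"
    using assms unfolding cedge_def wit_def by blast
  have "b \<in> set x" using e by auto
  then have "b - 1 < length \<delta>" using assms(2,3) by (auto simp: perms_def)
  then have "(up_dec (dd \<delta>) b \<and> b \<in> set (rev R)) \<or> (down_dec (dd \<delta>) b \<and> b \<in> set (rev U))"
    using e(6) down_dd up_dd by auto
  then show ?thesis unfolding cedge_def wit_def
    by (intro exI[of _ "rev R"] exI[of _ "rev U"] exI[of _ a] exI[of _ c]) (use e in auto)
qed

lemma step_rev: assumes "ptree_step \<delta> x y" "x \<in> perms n" "length \<delta> = n"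
  shows "ptree_step (dd \<delta>) (rev x) (rev y)"
proof -
  have y: "y \<in> perms n" using step_perms assms by blast
  from step_cedge[OF assms(1)] show ?thesis
  proof
    assume "cedge \<delta> x y"
    then show ?thesis using cedge_rev assms cedge_step(2) by blast
  next
    assume "cedge \<delta> y x"
    then show ?thesis using cedge_rev y assms cedge_step(1) by blast
  qed
qed

lemma cong_rev: assumes "ptree_cong \<delta> x y" "x \<in> perms n" "length \<delta> = n"
  shows "ptree_cong (dd \<delta>) (rev x) (rev y)"
proof -
  have "(ptree_step \<delta>)\<^sup>*\<^sup>* x y" using assms(1) by (simp add: ptree_cong_def)
  then show ?thesis
  proof (induction rule: rtranclp_induct)
    case base then show ?case by (simp add: ptree_cong_def)
  next
    case (step y z)
    have "y \<in> perms n" using cong_perms[of \<delta> x y n] step.hyps(1) assms(2) by (simp add: ptree_cong_def)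
    then have "ptree_step (dd \<delta>) (rev y) (rev z)" using step_rev step.hyps(2) assms(3) by blast
    then show ?case using step.IH unfolding ptree_cong_def by simp
  qed
qed

theorem proposition2p13:
  fixes n :: nat and \<delta> :: "deco list" and \<sigma> \<sigma>' \<tau> \<tau>' :: "nat list"
  assumes "n \<ge> 1" and "length \<delta> = n"
    and "\<sigma> \<in> perms n" and "\<sigma>' \<in> perms n" and "\<tau> \<in> perms n" and "\<tau>' \<in> perms n"
    and "ptree_cong \<delta> \<sigma> \<sigma>'" and "ptree_cong \<delta> \<tau> \<tau>'"
  shows "ptree_cong \<delta> (weak_meet n \<sigma> \<tau>) (weak_meet n \<sigma>' \<tau>') \<and>
         ptree_cong \<delta> (weak_join n \<sigma> \<tau>) (weak_join n \<sigma>' \<tau>')"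
proof
  show "ptree_cong \<delta> (weak_join n \<sigma> \<tau>) (weak_join n \<sigma>' \<tau>')"
    using join_cong assms by blast
next
  have l: "length (dd \<delta>) = n" using assms(2) by (simp add: dd_def)
  have "ptree_cong (dd \<delta>) (rev \<sigma>) (rev \<sigma>')" "ptree_cong (dd \<delta>) (rev \<tau>) (rev \<tau>')"
    using cong_rev assms by blast+
  then have "ptree_cong (dd \<delta>) (J n (rev \<sigma>) (rev \<tau>)) (J n (rev \<sigma>') (rev \<tau>'))"
    using join_cong rev_perms assms by blast
  moreover have "J n (rev \<sigma>) (rev \<tau>) \<in> perms n" using join_spec rev_perms assms by blast
  ultimately have "ptree_cong (dd (dd \<delta>)) (rev (J n (rev \<sigma>) (rev \<tau>))) (rev (J n (rev \<sigma>') (rev \<tau>')))"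
    using cong_rev l by blast
  then show "ptree_cong \<delta> (weak_meet n \<sigma> \<tau>) (weak_meet n \<sigma>' \<tau>')"
    using meet_rev assms by simp
qed

end
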